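(* Let $p(g)=y^{a(g)}x^{b(g)}$ be a continuous $1$-cocycle of $G_k$ with values in $\pi/[\pi]_2$. The lifts of $p$ to $1$-cocycles in $C^1(G_k,\pi/[\pi]_3)$ are in bijection with the set of cochains $c\in C^1(G_k,\hat{\mathbb Z}(2))$ such that $Dc=-b\cup a$, via $c\mapsto(b,a)_c$, where $(b,a)_c(g)=y^{a(g)}x^{b(g)}[x,y]^{c(g)}$.
   Context: Let $k$ be either a subfield of $\mathbb C$ or the completion of a number field $F\subset\mathbb C$ at a place, with fixed embeddings $\mathbb C\supset\overline{\mathbb Q}\subseteq\overline k$; $\chi$ the cyclotomic character. $\pi=\pi_1^{et}(\mathbb P^1_{\overline k}-\{0,1,\infty\},\overrightarrow{01})\cong\langle x,y\rangle^\wedge$ (profinite free group; $x$ loop around $0$, $y$ loop around $1$) with $G_k$-action $\sigma(x)=x^{\chi(\sigma)}$, $\sigma(y)=\mathfrak f(\sigma)^{-1}y^{\chi(\sigma)}\mathfrak f(\sigma)$, $\mathfrak f:G_k\to[\pi]_2$ a cocycle. $[\pi]_n$ is the lower central series, $[u,v]=uvu^{-1}v^{-1}$, $\hat{\mathbb Z}(n)$ is $\hat{\mathbb Z}$ with action via $\chi^n$; $b,a:G_k\to\hat{\mathbb Z}(1)$. A $1$-cocycle with values in a nonabelian group $Q$ means $s(gh)=s(g)\,g(s(h))$; $C^1$ denotes continuous cochains, $D$ the differential, and $(b\cup a)(g,h)=b(g)\chi(g)a(h)$. *)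

theory Defs
  imports "HOL-Algebra.Group" "HOL-Analysis.Analysis"
begin

text \<open>An element of \<open>\<hat>\<int> = lim Z/n\<close> is represented by the function
  \<open>z :: nat \<Rightarrow> int\<close> with \<open>z n \<in> {0..<n}\<close> the residue mod n (n > 0),
  compatible under divisibility; \<open>z 0 = 0\<close> normalises the unused slot.\<close>

definition zhat :: "(nat \<Rightarrow> int) set" where
  "zhat = {z. z 0 = 0 \<and> (\<forall>n>0. 0 \<le> z n \<and> z n < int n)
              \<and> (\<forall>m n. 0 < m \<and> m dvd n \<longrightarrow> z m = z n mod int m)}"

definition zconst :: "int \<Rightarrow> nat \<Rightarrow> int" where
  "zconst k = (\<lambda>n. if n = 0 then 0 else k mod int n)"

definition zzero :: "nat \<Rightarrow> int" where "zzero = zconst 0"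
definition zone :: "nat \<Rightarrow> int" where "zone = zconst 1"

definition zadd :: "(nat \<Rightarrow> int) \<Rightarrow> (nat \<Rightarrow> int) \<Rightarrow> nat \<Rightarrow> int" where
  "zadd z w = (\<lambda>n. if n = 0 then 0 else (z n + w n) mod int n)"

definition zmul :: "(nat \<Rightarrow> int) \<Rightarrow> (nat \<Rightarrow> int) \<Rightarrow> nat \<Rightarrow> int" where
  "zmul z w = (\<lambda>n. if n = 0 then 0 else (z n * w n) mod int n)"

definition zneg :: "(nat \<Rightarrow> int) \<Rightarrow> nat \<Rightarrow> int" where
  "zneg z = (\<lambda>n. if n = 0 then 0 else (- z n) mod int n)"

text \<open>Continuity of a map into \<open>\<hat>\<int>\<close> (inverse limit topology of the discrete
  \<open>Z/n\<close>): it lands in \<open>\<hat>\<int>\<close> and the preimage of every subbasic open set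
  \<open>{z. z n = r}\<close> is open.\<close>

definition zhat_cont :: "'g topology \<Rightarrow> ('g \<Rightarrow> nat \<Rightarrow> int) \<Rightarrow> bool" where
  "zhat_cont T f \<longleftrightarrow> f \<in> topspace T \<rightarrow> zhat \<and>
     (\<forall>n>0. \<forall>r. openin T {g \<in> topspace T. f g n = r})"

definition topological_group :: "('g,'m) monoid_scheme \<Rightarrow> 'g topology \<Rightarrow> bool" where
  "topological_group G T \<longleftrightarrow> group G \<and> topspace T = carrier G \<and>
     continuous_map (prod_topology T T) T (\<lambda>(g,h). g \<otimes>\<^bsub>G\<^esub> h) \<and>
     continuous_map T T (\<lambda>g. inv\<^bsub>G\<^esub> g)"

definition zhat_character :: "('g,'m) monoid_scheme \<Rightarrow> 'g topology \<Rightarrow> ('g \<Rightarrow> nat \<Rightarrow> int) \<Rightarrow> bool" where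
  "zhat_character G T chi \<longleftrightarrow> zhat_cont T chi \<and>
     (\<forall>g\<in>carrier G. \<exists>u\<in>zhat. zmul (chi g) u = zone) \<and>
     (\<forall>g\<in>carrier G. \<forall>h\<in>carrier G. chi (g \<otimes>\<^bsub>G\<^esub> h) = zmul (chi g) (chi h))"

text \<open>\<open>\<pi>/[\<pi>]_2\<close>: the pair \<open>(a,b)\<close> stands for \<open>y^a x^b\<close> (abelian).\<close>
definition Q2 :: "((nat \<Rightarrow> int) \<times> (nat \<Rightarrow> int)) monoid" where
  "Q2 = \<lparr>carrier = zhat \<times> zhat,
         monoid.mult = (\<lambda>(a,b) (a',b'). (zadd a a', zadd b b')),
         monoid.one = (zzero, zzero)\<rparr>"

text \<open>\<open>\<pi>/[\<pi>]_3\<close>: the triple \<open>(a,b,c)\<close> stands for \<open>y^a x^b [x,y]^c\<close>; since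
  \<open>x^b y^a' = y^a' x^b [x,y]^(b a')\<close> modulo \<open>[\<pi>]_3\<close>, the product is as below.\<close>
definition Q3 :: "((nat \<Rightarrow> int) \<times> (nat \<Rightarrow> int) \<times> (nat \<Rightarrow> int)) monoid" where
  "Q3 = \<lparr>carrier = zhat \<times> zhat \<times> zhat,
         monoid.mult = (\<lambda>(a,b,c) (a',b',c'). (zadd a a', zadd b b', zadd (zadd c c') (zmul b a'))),
         monoid.one = (zzero, zzero, zzero)\<rparr>"

definition yxc :: "(nat \<Rightarrow> int) \<Rightarrow> (nat \<Rightarrow> int) \<Rightarrow> (nat \<Rightarrow> int) \<Rightarrow> (nat \<Rightarrow> int) \<times> (nat \<Rightarrow> int) \<times> (nat \<Rightarrow> int)" where
  "yxc a b c = (a, b, c)"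

definition proj32 :: "(nat \<Rightarrow> int) \<times> (nat \<Rightarrow> int) \<times> (nat \<Rightarrow> int) \<Rightarrow> (nat \<Rightarrow> int) \<times> (nat \<Rightarrow> int)" where
  "proj32 = (\<lambda>(a,b,c). (a,b))"

text \<open>Induced Galois actions: \<open>\<sigma>(x) = x^\<chi>\<close>, \<open>\<sigma>(y) = f^-1 y^\<chi> f\<close> with
  \<open>f \<in> [\<pi>]_2\<close> central modulo \<open>[\<pi>]_3\<close>, hence \<open>[x,y] \<mapsto> [x,y]^(\<chi>^2)\<close>.\<close>
definition act2 :: "('g \<Rightarrow> nat \<Rightarrow> int) \<Rightarrow> 'g \<Rightarrow> (nat \<Rightarrow> int) \<times> (nat \<Rightarrow> int) \<Rightarrow> (nat \<Rightarrow> int) \<times> (nat \<Rightarrow> int)" where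
  "act2 chi g = (\<lambda>(a,b). (zmul (chi g) a, zmul (chi g) b))"

definition act3 :: "('g \<Rightarrow> nat \<Rightarrow> int) \<Rightarrow> 'g \<Rightarrow> (nat \<Rightarrow> int) \<times> (nat \<Rightarrow> int) \<times> (nat \<Rightarrow> int)
     \<Rightarrow> (nat \<Rightarrow> int) \<times> (nat \<Rightarrow> int) \<times> (nat \<Rightarrow> int)" where
  "act3 chi g = (\<lambda>(a,b,c). (zmul (chi g) a, zmul (chi g) b, zmul (zmul (chi g) (chi g)) c))"

definition cocycle1 :: "('g,'m) monoid_scheme \<Rightarrow> ('q,'n) monoid_scheme \<Rightarrow> ('g \<Rightarrow> 'q \<Rightarrow> 'q) \<Rightarrow> ('g \<Rightarrow> 'q) \<Rightarrow> bool" where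
  "cocycle1 G Q act s \<longleftrightarrow> s \<in> carrier G \<rightarrow> carrier Q \<and>
     (\<forall>g\<in>carrier G. \<forall>h\<in>carrier G. s (g \<otimes>\<^bsub>G\<^esub> h) = s g \<otimes>\<^bsub>Q\<^esub> act g (s h))"

definition cont2 :: "'g topology \<Rightarrow> ('g \<Rightarrow> (nat \<Rightarrow> int) \<times> (nat \<Rightarrow> int)) \<Rightarrow> bool" where
  "cont2 T s \<longleftrightarrow> zhat_cont T (\<lambda>g. fst (s g)) \<and> zhat_cont T (\<lambda>g. snd (s g))"

definition cont3 :: "'g topology \<Rightarrow> ('g \<Rightarrow> (nat \<Rightarrow> int) \<times> (nat \<Rightarrow> int) \<times> (nat \<Rightarrow> int)) \<Rightarrow> bool" where
  "cont3 T s \<longleftrightarrow> zhat_cont T (\<lambda>g. fst (s g)) \<and> zhat_cont T (\<lambda>g. fst (snd (s g)))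
                 \<and> zhat_cont T (\<lambda>g. snd (snd (s g)))"

definition C1 :: "('g,'m) monoid_scheme \<Rightarrow> 'g topology \<Rightarrow> ('g \<Rightarrow> nat \<Rightarrow> int) set" where
  "C1 G T = {c \<in> carrier G \<rightarrow>\<^sub>E zhat. zhat_cont T c}"

definition D2 :: "('g,'m) monoid_scheme \<Rightarrow> ('g \<Rightarrow> nat \<Rightarrow> int) \<Rightarrow> ('g \<Rightarrow> nat \<Rightarrow> int) \<Rightarrow> 'g \<Rightarrow> 'g \<Rightarrow> nat \<Rightarrow> int" where
  "D2 G chi c g h = zadd (zadd (zmul (zmul (chi g) (chi g)) (c h)) (zneg (c (g \<otimes>\<^bsub>G\<^esub> h)))) (c g)"

definition cup :: "('g \<Rightarrow> nat \<Rightarrow> int) \<Rightarrow> ('g \<Rightarrow> nat \<Rightarrow> int) \<Rightarrow> ('g \<Rightarrow> nat \<Rightarrow> int) \<Rightarrow> 'g \<Rightarrow> 'g \<Rightarrow> nat \<Rightarrow> int" where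
  "cup chi b a g h = zmul (b g) (zmul (chi g) (a h))"

end

theory Submission
  imports Defs
begin

lemma key_n:
  fixes X C Ch B k A :: int and n :: nat
  assumes "n > 0" "0 \<le> X" "X < int n"
  shows "(X = (C + k*k*Ch + B*(k*A)) mod int n) \<longleftrightarrow> ((k*k*Ch + - X + C) mod int n = (- (B*(k*A))) mod int n)"
proof -
  have "X = X mod int n" using assms by simp
  hence "(X = (C + k*k*Ch + B*(k*A)) mod int n) \<longleftrightarrow> (X mod int n = (C + k*k*Ch + B*(k*A)) mod int n)" by metis
  also have "\<dots> \<longleftrightarrow> int n dvd X - (C + k*k*Ch + B*(k*A))" by (rule mod_eq_dvd_iff)
  also have "\<dots> \<longleftrightarrow> int n dvd (k*k*Ch + - X + C) - (- (B*(k*A)))"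
    by (metis (no_types, lifting) dvd_minus_iff minus_diff_eq add.commute diff_add_eq_diff_diff_swap diff_minus_eq_add add_uminus_conv_diff diff_diff_eq)
  also have "\<dots> \<longleftrightarrow> ((k*k*Ch + - X + C) mod int n = (- (B*(k*A))) mod int n)" by (rule mod_eq_dvd_iff[symmetric])
  finally show ?thesis .
qed

lemma key:
  assumes "X \<in> zhat"
  shows "X = zadd (zadd C (zmul (zmul k k) Ch)) (zmul B (zmul k A)) \<longleftrightarrow>
         zadd (zadd (zmul (zmul k k) Ch) (zneg X)) C = zneg (zmul B (zmul k A))"
proof -
  have h: "\<And>n. n>0 \<Longrightarrow> 0 \<le> X n \<and> X n < int n" "X 0 = 0" using assms by (auto simp: zhat_def)
  have "(X = zadd (zadd C (zmul (zmul k k) Ch)) (zmul B (zmul k A))) \<longleftrightarrow>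
    (\<forall>n. X n = zadd (zadd C (zmul (zmul k k) Ch)) (zmul B (zmul k A)) n)" by (auto simp: fun_eq_iff)
  also have "\<dots> \<longleftrightarrow> (\<forall>n. zadd (zadd (zmul (zmul k k) Ch) (zneg X)) C n = zneg (zmul B (zmul k A)) n)"
  proof (intro iff_allI)
    fix n show "X n = zadd (zadd C (zmul (zmul k k) Ch)) (zmul B (zmul k A)) n \<longleftrightarrow>
      zadd (zadd (zmul (zmul k k) Ch) (zneg X)) C n = zneg (zmul B (zmul k A)) n"
    proof (cases "n = 0")
      case True then show ?thesis using h by (simp add: zadd_def zmul_def zneg_def)
    next
      case False
      then show ?thesis using key_n[of n "X n" "C n" "k n" "Ch n" "B n" "A n"] h(1)[of n]
        by (simp add: zadd_def zmul_def zneg_def mod_simps mult.assoc)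
    qed
  qed
  also have "\<dots> \<longleftrightarrow> zadd (zadd (zmul (zmul k k) Ch) (zneg X)) C = zneg (zmul B (zmul k A))" by (auto simp: fun_eq_iff)
  finally show ?thesis .
qed

theorem corollary12p1:
  fixes G :: "('g,'m) monoid_scheme" and T :: "'g topology"
    and chi a b :: "'g \<Rightarrow> nat \<Rightarrow> int"
  assumes "topological_group G T"
    and "zhat_character G T chi"
    and "cocycle1 G Q2 (act2 chi) (\<lambda>g\<in>carrier G. (a g, b g))"
    and "cont2 T (\<lambda>g\<in>carrier G. (a g, b g))"
  shows "bij_betw (\<lambda>c. \<lambda>g\<in>carrier G. yxc (a g) (b g) (c g))
           {c \<in> C1 G T. \<forall>g\<in>carrier G. \<forall>h\<in>carrier G. D2 G chi c g h = zneg (cup chi b a g h)}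
           {s \<in> carrier G \<rightarrow>\<^sub>E carrier Q3. cont3 T s \<and> cocycle1 G Q3 (act3 chi) s
              \<and> (\<forall>g\<in>carrier G. proj32 (s g) = (a g, b g))}"
proof -
  have grp: "group G" and top: "topspace T = carrier G" using assms(1) by (auto simp: topological_group_def)
  have mc: "\<And>g h. g \<in> carrier G \<Longrightarrow> h \<in> carrier G \<Longrightarrow> g \<otimes>\<^bsub>G\<^esub> h \<in> carrier G"
    using grp by (simp add: group.is_monoid monoid.m_closed)
  have abz: "\<And>g. g \<in> carrier G \<Longrightarrow> a g \<in> zhat \<and> b g \<in> zhat"
    using assms(3) by (force simp: cocycle1_def Q2_def Pi_def)
  have coc2: "\<And>g h. g \<in> carrier G \<Longrightarrow> h \<in> carrier G \<Longrightarrow>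
      a (g \<otimes>\<^bsub>G\<^esub> h) = zadd (a g) (zmul (chi g) (a h)) \<and> b (g \<otimes>\<^bsub>G\<^esub> h) = zadd (b g) (zmul (chi g) (b h))"
  proof -
    fix g h assume g: "g \<in> carrier G" and h: "h \<in> carrier G"
    from assms(3) g h have "(\<lambda>g\<in>carrier G. (a g, b g)) (g \<otimes>\<^bsub>G\<^esub> h) =
       (\<lambda>g\<in>carrier G. (a g, b g)) g \<otimes>\<^bsub>Q2\<^esub> act2 chi g ((\<lambda>g\<in>carrier G. (a g, b g)) h)"
      unfolding cocycle1_def by blast
    then show "a (g \<otimes>\<^bsub>G\<^esub> h) = zadd (a g) (zmul (chi g) (a h)) \<and> b (g \<otimes>\<^bsub>G\<^esub> h) = zadd (b g) (zmul (chi g) (b h))"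
      using g h mc[OF g h] by (simp add: Q2_def act2_def)
  qed
  have zc_cong: "\<And>f f'. (\<And>g. g \<in> carrier G \<Longrightarrow> f g = f' g) \<Longrightarrow> zhat_cont T f \<longleftrightarrow> zhat_cont T f'"
  proof -
    fix f f' :: "'g \<Rightarrow> nat \<Rightarrow> int" assume e: "\<And>g. g \<in> carrier G \<Longrightarrow> f g = f' g"
    have s: "\<And>n r. {g \<in> topspace T. f g n = r} = {g \<in> topspace T. f' g n = r}" using e top by auto
    show "zhat_cont T f \<longleftrightarrow> zhat_cont T f'" unfolding zhat_cont_def s using e top by (auto simp: Pi_def)
  qed
  have ca: "zhat_cont T (\<lambda>g. a g)" and cb: "zhat_cont T (\<lambda>g. b g)"
    using assms(4) zc_cong[of "\<lambda>g. fst ((\<lambda>g\<in>carrier G. (a g, b g)) g)" a]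
      zc_cong[of "\<lambda>g. snd ((\<lambda>g\<in>carrier G. (a g, b g)) g)" b] unfolding cont2_def by auto
  have coc_iff: "\<And>c. c \<in> carrier G \<rightarrow> zhat \<Longrightarrow>
     cocycle1 G Q3 (act3 chi) (\<lambda>g\<in>carrier G. yxc (a g) (b g) (c g)) \<longleftrightarrow>
     (\<forall>g\<in>carrier G. \<forall>h\<in>carrier G. D2 G chi c g h = zneg (cup chi b a g h))"
  proof -
    fix c assume c: "c \<in> carrier G \<rightarrow> zhat"
    have "cocycle1 G Q3 (act3 chi) (\<lambda>g\<in>carrier G. yxc (a g) (b g) (c g)) \<longleftrightarrow>
      (\<forall>g\<in>carrier G. \<forall>h\<in>carrier G. c (g \<otimes>\<^bsub>G\<^esub> h) = zadd (zadd (c g) (zmul (zmul (chi g) (chi g)) (c h))) (zmul (b g) (zmul (chi g) (a h))))"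
      unfolding cocycle1_def using c abz mc coc2
      by (auto simp: Q3_def act3_def yxc_def Pi_def)
    also have "\<dots> \<longleftrightarrow> (\<forall>g\<in>carrier G. \<forall>h\<in>carrier G. D2 G chi c g h = zneg (cup chi b a g h))"
      unfolding D2_def cup_def using key c mc by (meson PiE)
    finally show "cocycle1 G Q3 (act3 chi) (\<lambda>g\<in>carrier G. yxc (a g) (b g) (c g)) \<longleftrightarrow>
     (\<forall>g\<in>carrier G. \<forall>h\<in>carrier G. D2 G chi c g h = zneg (cup chi b a g h))" .
  qed
  show ?thesis
  proof (rule bij_betwI')
    fix c c' assume "c \<in> {c \<in> C1 G T. \<forall>g\<in>carrier G. \<forall>h\<in>carrier G. D2 G chi c g h = zneg (cup chi b a g h)}"
      "c' \<in> {c \<in> C1 G T. \<forall>g\<in>carrier G. \<forall>h\<in>carrier G. D2 G chi c g h = zneg (cup chi b a g h)}"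
    then have "c \<in> carrier G \<rightarrow>\<^sub>E zhat" "c' \<in> carrier G \<rightarrow>\<^sub>E zhat" by (auto simp: C1_def)
    then show "((\<lambda>g\<in>carrier G. yxc (a g) (b g) (c g)) = (\<lambda>g\<in>carrier G. yxc (a g) (b g) (c' g))) = (c = c')"
      by (auto simp: fun_eq_iff yxc_def PiE_def extensional_def) (metis restrict_apply)
  next
    fix c assume "c \<in> {c \<in> C1 G T. \<forall>g\<in>carrier G. \<forall>h\<in>carrier G. D2 G chi c g h = zneg (cup chi b a g h)}"
    then have c: "c \<in> carrier G \<rightarrow>\<^sub>E zhat" "zhat_cont T c"
      and D: "\<forall>g\<in>carrier G. \<forall>h\<in>carrier G. D2 G chi c g h = zneg (cup chi b a g h)" by (auto simp: C1_def)
    have "cont3 T (\<lambda>g\<in>carrier G. yxc (a g) (b g) (c g))"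
      unfolding cont3_def
      using zc_cong[of "\<lambda>g. fst ((\<lambda>g\<in>carrier G. yxc (a g) (b g) (c g)) g)" a]
        zc_cong[of "\<lambda>g. fst (snd ((\<lambda>g\<in>carrier G. yxc (a g) (b g) (c g)) g))" b]
        zc_cong[of "\<lambda>g. snd (snd ((\<lambda>g\<in>carrier G. yxc (a g) (b g) (c g)) g))" c] ca cb c(2)
      by (simp add: yxc_def)
    moreover have "cocycle1 G Q3 (act3 chi) (\<lambda>g\<in>carrier G. yxc (a g) (b g) (c g))"
      using coc_iff[of c] c D by auto
    moreover have "(\<lambda>g\<in>carrier G. yxc (a g) (b g) (c g)) \<in> carrier G \<rightarrow>\<^sub>E carrier Q3"
      using c abz by (auto simp: Q3_def yxc_def)
    ultimately show "(\<lambda>g\<in>carrier G. yxc (a g) (b g) (c g)) \<in> {s \<in> carrier G \<rightarrow>\<^sub>E carrier Q3. cont3 T s \<and> cocycle1 G Q3 (act3 chi) s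
              \<and> (\<forall>g\<in>carrier G. proj32 (s g) = (a g, b g))}"
      by (auto simp: proj32_def yxc_def)
  next
    fix s assume "s \<in> {s \<in> carrier G \<rightarrow>\<^sub>E carrier Q3. cont3 T s \<and> cocycle1 G Q3 (act3 chi) s
              \<and> (\<forall>g\<in>carrier G. proj32 (s g) = (a g, b g))}"
    then have s: "s \<in> carrier G \<rightarrow>\<^sub>E carrier Q3" "cont3 T s" "cocycle1 G Q3 (act3 chi) s"
      "\<forall>g\<in>carrier G. proj32 (s g) = (a g, b g)" by auto
    define c where "c = (\<lambda>g\<in>carrier G. snd (snd (s g)))"
    have seq: "s = (\<lambda>g\<in>carrier G. yxc (a g) (b g) (c g))"
    proof
      fix g show "s g = (\<lambda>g\<in>carrier G. yxc (a g) (b g) (c g)) g"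
      proof (cases "g \<in> carrier G")
        case True
        obtain x y z where "s g = (x, y, z)" by (cases "s g") auto
        then show ?thesis using True s(4) by (auto simp: c_def yxc_def proj32_def)
      qed (use s(1) in auto)
    qed
    have cE: "c \<in> carrier G \<rightarrow>\<^sub>E zhat" using s(1) by (force simp: c_def Q3_def PiE_def Pi_def)
    have "zhat_cont T c" using s(2) zc_cong[of c "\<lambda>g. snd (snd (s g))"] by (simp add: cont3_def c_def)
    moreover have "\<forall>g\<in>carrier G. \<forall>h\<in>carrier G. D2 G chi c g h = zneg (cup chi b a g h)"
      using coc_iff[of c] cE s(3) seq by auto
    ultimately show "\<exists>c\<in>{c \<in> C1 G T. \<forall>g\<in>carrier G. \<forall>h\<in>carrier G. D2 G chi c g h = zneg (cup chi b a g h)}.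
          s = (\<lambda>g\<in>carrier G. yxc (a g) (b g) (c g))"
      using cE seq by (auto simp: C1_def)
  qed
qed

end
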